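(* Let $k\ge2$, $d=2k+1$, and let $u,v$ be smooth functions of $(x^1,\dots,x^{d})$ satisfying $$u_1+v_2=\sum_{s=2}^{k}(u_{2s-1}v_{2s}-u_{2s}v_{2s-1}),\qquad u_2+v_3=\sum_{s=2}^{k}(u_{2s}v_{2s+1}-u_{2s+1}v_{2s}).$$ For a parameter $\lambda$ set $\alpha_{2s-1}=1$, $\alpha_{2s}=\lambda$, and $$X=\partial_2+\lambda\partial_3-\sum_{i=3}^{2k}\alpha_i(u_i\partial_{i+1}-u_{i+1}\partial_i),\qquad Y=\partial_1+\lambda\partial_2+\sum_{i=3}^{2k}\alpha_i(v_i\partial_{i+1}-v_{i+1}\partial_i).$$ Then $[X,Y]=0$ for all $\lambda$.
   Context: $\partial_i=\partial/\partial x^i$, $u_i=\partial u/\partial x^i$, $v_i=\partial v/\partial x^i$; $[X,Y]$ is the Lie bracket of vector fields on the space of $x$'s. *)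

theory Defs
  imports "HOL-Analysis.Analysis"
begin

text \<open>Points of R^d are vectors of type real^'n; the coordinates x^1,...,x^d are
  identified with the elements of 'n through an enumeration e, which is a bijection
  from {1..d} onto the index type.\<close>

definition coord_enum :: "nat \<Rightarrow> (nat \<Rightarrow> 'n::finite) \<Rightarrow> bool" where
  "coord_enum d e \<longleftrightarrow> bij_betw e {1..d} (UNIV :: 'n set)"

definition pd :: "(nat \<Rightarrow> 'n::finite) \<Rightarrow> nat \<Rightarrow> (real^'n \<Rightarrow> real) \<Rightarrow> real^'n \<Rightarrow> real" where
  "pd e i f x = deriv (\<lambda>t. f (x + t *\<^sub>R axis (e i) 1)) 0"

fun ipd :: "(nat \<Rightarrow> 'n::finite) \<Rightarrow> nat list \<Rightarrow> (real^'n \<Rightarrow> real) \<Rightarrow> real^'n \<Rightarrow> real" where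
  "ipd e [] f = f"
| "ipd e (j # js) f = pd e j (ipd e js f)"

definition smooth :: "nat \<Rightarrow> (nat \<Rightarrow> 'n::finite) \<Rightarrow> (real^'n \<Rightarrow> real) \<Rightarrow> bool" where
  "smooth d e f \<longleftrightarrow> (\<forall>js. set js \<subseteq> {1..d} \<longrightarrow> (\<forall>x. ipd e js f differentiable (at x)))"

text \<open>A vector field is given by its coefficient functions: X i is the coefficient of
  the coordinate vector field for x^i (i = 1..d). Application to a function: X(f).\<close>
definition vf_apply :: "nat \<Rightarrow> (nat \<Rightarrow> 'n::finite) \<Rightarrow> (nat \<Rightarrow> real^'n \<Rightarrow> real) \<Rightarrow> (real^'n \<Rightarrow> real) \<Rightarrow> real^'n \<Rightarrow> real" where
  "vf_apply d e X f x = (\<Sum>i=1..d. X i x * pd e i f x)"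

definition lie_bracket :: "nat \<Rightarrow> (nat \<Rightarrow> 'n::finite) \<Rightarrow> (nat \<Rightarrow> real^'n \<Rightarrow> real) \<Rightarrow> (nat \<Rightarrow> real^'n \<Rightarrow> real) \<Rightarrow> nat \<Rightarrow> real^'n \<Rightarrow> real" where
  "lie_bracket d e X Y j x = vf_apply d e X (Y j) x - vf_apply d e Y (X j) x"

definition dvf :: "nat \<Rightarrow> nat \<Rightarrow> real^'n \<Rightarrow> real" where
  "dvf i = (\<lambda>j x. if j = i then 1 else 0)"

definition alpha :: "real \<Rightarrow> nat \<Rightarrow> real" where
  "alpha lam i = (if odd i then 1 else lam)"

definition fieldX :: "nat \<Rightarrow> (nat \<Rightarrow> 'n::finite) \<Rightarrow> real \<Rightarrow> (real^'n \<Rightarrow> real) \<Rightarrow> nat \<Rightarrow> real^'n \<Rightarrow> real" where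
  "fieldX k e lam u = (\<lambda>j x. dvf 2 j x + lam * dvf 3 j x
      - (\<Sum>i=3..2*k. alpha lam i * (pd e i u x * dvf (i+1) j x - pd e (i+1) u x * dvf i j x)))"

definition fieldY :: "nat \<Rightarrow> (nat \<Rightarrow> 'n::finite) \<Rightarrow> real \<Rightarrow> (real^'n \<Rightarrow> real) \<Rightarrow> nat \<Rightarrow> real^'n \<Rightarrow> real" where
  "fieldY k e lam v = (\<lambda>j x. dvf 1 j x + lam * dvf 2 j x
      + (\<Sum>i=3..2*k. alpha lam i * (pd e i v x * dvf (i+1) j x - pd e (i+1) v x * dvf i j x)))"

end

theory Submission
  imports Defs
begin


definition dd :: "'a::real_normed_vector \<Rightarrow> ('a \<Rightarrow> real) \<Rightarrow> 'a \<Rightarrow> real" where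
  "dd w f y = deriv (\<lambda>t. f (y + t *\<^sub>R w)) 0"

lemma line_DERIV:
  fixes f :: "'a::real_normed_vector \<Rightarrow> real"
  assumes "f differentiable (at y)"
  shows "((\<lambda>t. f (y + t *\<^sub>R w)) has_real_derivative dd w f y) (at 0)"
proof -
  have "(\<lambda>t::real. y + t *\<^sub>R w) differentiable (at 0)"
    by (intro derivative_intros)
  moreover have "f differentiable (at ((\<lambda>t::real. y + t *\<^sub>R w) 0))" using assms by simp
  ultimately have "(f \<circ> (\<lambda>t::real. y + t *\<^sub>R w)) differentiable (at 0)"
    by (rule differentiable_chain_at)
  then show ?thesis unfolding dd_def
    by (simp add: DERIV_deriv_iff_real_differentiable o_def)
qed

lemma shift_DERIV:
  fixes g :: "'a::real_normed_vector \<Rightarrow> real"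
  assumes "\<And>z. g differentiable (at z)"
  shows "((\<lambda>s. g (y + s *\<^sub>R w)) has_real_derivative dd w g (y + s *\<^sub>R w)) (at s)"
proof -
  have "((\<lambda>t. g ((y + s *\<^sub>R w) + t *\<^sub>R w)) has_real_derivative dd w g (y + s *\<^sub>R w)) (at 0)"
    using line_DERIV assms by blast
  moreover have "(\<lambda>t. g ((y + s *\<^sub>R w) + t *\<^sub>R w)) = (\<lambda>t. (\<lambda>s. g (y + s *\<^sub>R w)) (t + s))"
    by (simp add: scaleR_add_left algebra_simps)
  ultimately have "((\<lambda>t. (\<lambda>s. g (y + s *\<^sub>R w)) (t + s)) has_real_derivative dd w g (y + s *\<^sub>R w)) (at 0)"
    by simp
  then show ?thesis using DERIV_shift[of "\<lambda>s. g (y + s *\<^sub>R w)" _ 0 s] by simp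
qed

lemma mvt_square:
  fixes f :: "'a::real_normed_vector \<Rightarrow> real"
  assumes f: "\<And>z. f differentiable (at z)" and fa: "\<And>z. dd a f differentiable (at z)"
    and h: "0 < h"
  shows "\<exists>\<xi> \<eta>. 0 < \<xi> \<and> \<xi> < h \<and> 0 < \<eta> \<and> \<eta> < h \<and>
     f (x + h *\<^sub>R a + h *\<^sub>R b) - f (x + h *\<^sub>R a) - f (x + h *\<^sub>R b) + f x
       = h * h * dd b (dd a f) (x + \<xi> *\<^sub>R a + \<eta> *\<^sub>R b)"
proof -
  define \<phi> where "\<phi> s = f ((x + h *\<^sub>R b) + s *\<^sub>R a) - f (x + s *\<^sub>R a)" for s
  have d1: "\<And>s. (\<phi> has_real_derivative (dd a f ((x + h *\<^sub>R b) + s *\<^sub>R a) - dd a f (x + s *\<^sub>R a))) (at s)"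
    unfolding \<phi>_def[abs_def] by (intro DERIV_diff shift_DERIV f)
  then obtain \<xi> where xi: "0 < \<xi>" "\<xi> < h"
    and e1: "\<phi> h - \<phi> 0 = (h - 0) * (dd a f ((x + h *\<^sub>R b) + \<xi> *\<^sub>R a) - dd a f (x + \<xi> *\<^sub>R a))"
    using MVT2[OF h d1] by blast
  define \<psi> where "\<psi> t = dd a f ((x + \<xi> *\<^sub>R a) + t *\<^sub>R b)" for t
  have d2: "\<And>t. (\<psi> has_real_derivative dd b (dd a f) ((x + \<xi> *\<^sub>R a) + t *\<^sub>R b)) (at t)"
    unfolding \<psi>_def[abs_def] by (intro shift_DERIV fa)
  then obtain \<eta> where eta: "0 < \<eta>" "\<eta> < h"
    and e2: "\<psi> h - \<psi> 0 = (h - 0) * dd b (dd a f) ((x + \<xi> *\<^sub>R a) + \<eta> *\<^sub>R b)"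
    using MVT2[OF h d2] by blast
  have "f (x + h *\<^sub>R a + h *\<^sub>R b) - f (x + h *\<^sub>R a) - f (x + h *\<^sub>R b) + f x = \<phi> h - \<phi> 0"
    unfolding \<phi>_def by (simp add: algebra_simps)
  also have "\<dots> = h * (\<psi> h - \<psi> 0)" using e1 unfolding \<psi>_def by (simp add: algebra_simps)
  also have "\<dots> = h * h * dd b (dd a f) (x + \<xi> *\<^sub>R a + \<eta> *\<^sub>R b)" using e2 by simp
  finally show ?thesis using xi eta by blast
qed

lemma schwarz:
  fixes f :: "'a::real_normed_vector \<Rightarrow> real"
  assumes f: "\<And>z. f differentiable (at z)" and fa: "\<And>z. dd a f differentiable (at z)"
    and fb: "\<And>z. dd b f differentiable (at z)"
    and ca: "isCont (dd b (dd a f)) x" and cb: "isCont (dd a (dd b f)) x"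
  shows "dd b (dd a f) x = dd a (dd b f) x"
proof -
  define h where "h n = inverse (real (Suc n))" for n
  have hpos: "0 < h n" for n unfolding h_def by simp
  have "\<forall>n. \<exists>\<xi> \<eta> \<xi>' \<eta>'. 0 < \<xi> \<and> \<xi> < h n \<and> 0 < \<eta> \<and> \<eta> < h n \<and>
          0 < \<xi>' \<and> \<xi>' < h n \<and> 0 < \<eta>' \<and> \<eta>' < h n \<and>
          dd b (dd a f) (x + \<xi> *\<^sub>R a + \<eta> *\<^sub>R b) = dd a (dd b f) (x + \<xi>' *\<^sub>R b + \<eta>' *\<^sub>R a)"
  proof
    fix n
    obtain \<xi> \<eta> where 1: "0 < \<xi> \<and> \<xi> < h n \<and> 0 < \<eta> \<and> \<eta> < h n \<and>
     f (x + h n *\<^sub>R a + h n *\<^sub>R b) - f (x + h n *\<^sub>R a) - f (x + h n *\<^sub>R b) + f x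
       = h n * h n * dd b (dd a f) (x + \<xi> *\<^sub>R a + \<eta> *\<^sub>R b)"
      using mvt_square[OF f fa hpos] by blast
    obtain \<xi>' \<eta>' where 2: "0 < \<xi>' \<and> \<xi>' < h n \<and> 0 < \<eta>' \<and> \<eta>' < h n \<and>
     f (x + h n *\<^sub>R b + h n *\<^sub>R a) - f (x + h n *\<^sub>R b) - f (x + h n *\<^sub>R a) + f x
       = h n * h n * dd a (dd b f) (x + \<xi>' *\<^sub>R b + \<eta>' *\<^sub>R a)"
      using mvt_square[OF f fb hpos] by blast
    have "h n * h n * dd b (dd a f) (x + \<xi> *\<^sub>R a + \<eta> *\<^sub>R b) = h n * h n * dd a (dd b f) (x + \<xi>' *\<^sub>R b + \<eta>' *\<^sub>R a)"
      using 1 2 by (simp add: algebra_simps)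
    then have "dd b (dd a f) (x + \<xi> *\<^sub>R a + \<eta> *\<^sub>R b) = dd a (dd b f) (x + \<xi>' *\<^sub>R b + \<eta>' *\<^sub>R a)"
      using hpos[of n] by simp
    then show "\<exists>\<xi> \<eta> \<xi>' \<eta>'. 0 < \<xi> \<and> \<xi> < h n \<and> 0 < \<eta> \<and> \<eta> < h n \<and>
          0 < \<xi>' \<and> \<xi>' < h n \<and> 0 < \<eta>' \<and> \<eta>' < h n \<and>
          dd b (dd a f) (x + \<xi> *\<^sub>R a + \<eta> *\<^sub>R b) = dd a (dd b f) (x + \<xi>' *\<^sub>R b + \<eta>' *\<^sub>R a)"
      using 1 2 by blast
  qed
  then obtain X E X' E' where P: "\<And>n. 0 < X n \<and> X n < h n \<and> 0 < E n \<and> E n < h n \<and>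
          0 < X' n \<and> X' n < h n \<and> 0 < E' n \<and> E' n < h n \<and>
          dd b (dd a f) (x + X n *\<^sub>R a + E n *\<^sub>R b) = dd a (dd b f) (x + X' n *\<^sub>R b + E' n *\<^sub>R a)"
    by metis
  have h0: "h \<longlonglongrightarrow> 0" unfolding h_def by (rule LIMSEQ_inverse_real_of_nat)
  have z: "g \<longlonglongrightarrow> 0" if "\<And>n. 0 < g n \<and> g n < h n" for g :: "nat \<Rightarrow> real"
    by (rule tendsto_sandwich[of "\<lambda>_. 0" g sequentially h]) (use that h0 less_imp_le in \<open>auto intro!: always_eventually\<close>)
  have X0: "X \<longlonglongrightarrow> 0" "E \<longlonglongrightarrow> 0" "X' \<longlonglongrightarrow> 0" "E' \<longlonglongrightarrow> 0"
    by (rule z; use P in blast)+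
  have t1: "(\<lambda>n. x + X n *\<^sub>R a + E n *\<^sub>R b) \<longlonglongrightarrow> x"
    using tendsto_add[OF tendsto_add[OF tendsto_const[of x] tendsto_scaleR[OF X0(1) tendsto_const[of a]]]
        tendsto_scaleR[OF X0(2) tendsto_const[of b]]] by simp
  have t2: "(\<lambda>n. x + X' n *\<^sub>R b + E' n *\<^sub>R a) \<longlonglongrightarrow> x"
    using tendsto_add[OF tendsto_add[OF tendsto_const[of x] tendsto_scaleR[OF X0(3) tendsto_const[of b]]]
        tendsto_scaleR[OF X0(4) tendsto_const[of a]]] by simp
  have L1: "(\<lambda>n. dd b (dd a f) (x + X n *\<^sub>R a + E n *\<^sub>R b)) \<longlonglongrightarrow> dd b (dd a f) x"
    by (rule isCont_tendsto_compose[OF ca t1])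
  have L2: "(\<lambda>n. dd b (dd a f) (x + X n *\<^sub>R a + E n *\<^sub>R b)) \<longlonglongrightarrow> dd a (dd b f) x"
    using isCont_tendsto_compose[OF cb t2] P by simp
  show ?thesis using LIMSEQ_unique[OF L1 L2] .
qed



lemma collapse: "finite S \<Longrightarrow> c \<in> S \<Longrightarrow> (\<Sum>m\<in>S. (if m = c then 1 else 0) * (G m::real)) = G c"
proof -
  assume "finite S" "c \<in> S"
  have "(\<Sum>m\<in>S. (if m = c then 1 else 0) * (G m::real)) = (\<Sum>m\<in>S. if m = c then G m else 0)"
    by (rule sum.cong) auto
  then show ?thesis using \<open>finite S\<close> \<open>c \<in> S\<close> by (simp add: sum.delta)
qed

lemma VX:
  assumes "k \<ge> 1"
  shows "vf_apply (2*k+1) e (fieldX k e lam u) g x = pd e 2 g x + lam * pd e 3 g x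
     - (\<Sum>i=3..2*k. alpha lam i * (pd e i u x * pd e (i+1) g x - pd e (i+1) u x * pd e i g x))"
proof -
  define G where "G m = pd e m g x" for m
  have "vf_apply (2*k+1) e (fieldX k e lam u) g x =
     (\<Sum>m=1..2*k+1. (if m = 2 then 1 else 0) * G m) + lam * (\<Sum>m=1..2*k+1. (if m = 3 then 1 else 0) * G m)
     - (\<Sum>m=1..2*k+1. (\<Sum>i=3..2*k. alpha lam i * (pd e i u x * (if m = i+1 then 1 else 0) - pd e (i+1) u x * (if m = i then 1 else 0))) * G m)"
    unfolding vf_apply_def fieldX_def dvf_def G_def
    by (simp add: algebra_simps sum.distrib sum_subtractf sum_distrib_left)
  also have "(\<Sum>m=1..2*k+1. (\<Sum>i=3..2*k. alpha lam i * (pd e i u x * (if m = i+1 then 1 else 0) - pd e (i+1) u x * (if m = i then 1 else 0))) * G m)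
     = (\<Sum>m=1..2*k+1. \<Sum>i=3..2*k. alpha lam i * (pd e i u x * ((if m = i+1 then 1 else 0) * G m) - pd e (i+1) u x * ((if m = i then 1 else 0) * G m)))"
    by (intro sum.cong refl, subst sum_distrib_right, intro sum.cong refl, simp add: algebra_simps)
  also have "\<dots> = (\<Sum>i=3..2*k. \<Sum>m=1..2*k+1. alpha lam i * (pd e i u x * ((if m = i+1 then 1 else 0) * G m) - pd e (i+1) u x * ((if m = i then 1 else 0) * G m)))"
    by (rule sum.swap)
  also have "\<dots> = (\<Sum>i=3..2*k. alpha lam i * (pd e i u x * G (i+1) - pd e (i+1) u x * G i))"
  proof (rule sum.cong[OF refl])
    fix i assume i: "i \<in> {3..2*k}"
    have "(\<Sum>m=1..2*k+1. alpha lam i * (pd e i u x * ((if m = i+1 then 1 else 0) * G m) - pd e (i+1) u x * ((if m = i then 1 else 0) * G m)))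
      = alpha lam i * (pd e i u x * (\<Sum>m=1..2*k+1. (if m = i+1 then 1 else 0) * G m) - pd e (i+1) u x * (\<Sum>m=1..2*k+1. (if m = i then 1 else 0) * G m))"
      by (simp add: sum_distrib_left sum_subtractf algebra_simps)
    also have "\<dots> = alpha lam i * (pd e i u x * G (i+1) - pd e (i+1) u x * G i)"
      using i by (simp add: collapse)
    finally show "(\<Sum>m=1..2*k+1. alpha lam i * (pd e i u x * ((if m = i+1 then 1 else 0) * G m) - pd e (i+1) u x * ((if m = i then 1 else 0) * G m)))
      = alpha lam i * (pd e i u x * G (i+1) - pd e (i+1) u x * G i)" .
  qed
  finally show ?thesis using assms by (simp add: collapse G_def)
qed



lemma pd_DERIV:
  "f differentiable (at x) \<Longrightarrow> ((\<lambda>t. f (x + t *\<^sub>R axis (e i) 1)) has_real_derivative pd e i f x) (at 0)"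
  using line_DERIV[of f x "axis (e i) 1"] by (simp add: pd_def dd_def)

lemma F_DERIV:
  fixes k :: nat and lam :: real
  assumes d: "\<And>i y. i \<in> {1..2*k+1} \<Longrightarrow> pd e i u differentiable (at y)" "\<And>i y. i \<in> {1..2*k+1} \<Longrightarrow> pd e i v differentiable (at y)"
    and k1: "k \<ge> 1"
  defines "F \<equiv> \<lambda>y. pd e 1 u y + lam * pd e 2 u y + pd e 2 v y + lam * pd e 3 v y
        - (\<Sum>i=3..2*k. alpha lam i * (pd e i u y * pd e (i+1) v y - pd e (i+1) u y * pd e i v y))"
  shows "((\<lambda>t. F (x + t *\<^sub>R axis (e c) 1)) has_real_derivative
     pd e c (pd e 1 u) x + lam * pd e c (pd e 2 u) x + pd e c (pd e 2 v) x + lam * pd e c (pd e 3 v) x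
     - (\<Sum>i=3..2*k. alpha lam i * (pd e c (pd e i u) x * pd e (i+1) v x + pd e i u x * pd e c (pd e (i+1) v) x
           - (pd e c (pd e (i+1) u) x * pd e i v x + pd e (i+1) u x * pd e c (pd e i v) x)))) (at 0)"
  unfolding F_def
  apply (rule derivative_eq_intros pd_DERIV d refl | (use k1 in simp; fail))+
  apply (simp add: algebra_simps)
  done

lemma VY:
  assumes "k \<ge> 1"
  shows "vf_apply (2*k+1) e (fieldY k e lam v) g x = pd e 1 g x + lam * pd e 2 g x
     + (\<Sum>i=3..2*k. alpha lam i * (pd e i v x * pd e (i+1) g x - pd e (i+1) v x * pd e i g x))"
proof -
  define G where "G m = pd e m g x" for m
  have "vf_apply (2*k+1) e (fieldY k e lam v) g x =
     (\<Sum>m=1..2*k+1. (if m = 1 then 1 else 0) * G m) + lam * (\<Sum>m=1..2*k+1. (if m = 2 then 1 else 0) * G m)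
     + (\<Sum>m=1..2*k+1. (\<Sum>i=3..2*k. alpha lam i * (pd e i v x * (if m = i+1 then 1 else 0) - pd e (i+1) v x * (if m = i then 1 else 0))) * G m)"
    unfolding vf_apply_def fieldY_def dvf_def G_def
    by (simp add: algebra_simps sum.distrib sum_subtractf sum_distrib_left)
  also have "(\<Sum>m=1..2*k+1. (\<Sum>i=3..2*k. alpha lam i * (pd e i v x * (if m = i+1 then 1 else 0) - pd e (i+1) v x * (if m = i then 1 else 0))) * G m)
     = (\<Sum>m=1..2*k+1. \<Sum>i=3..2*k. alpha lam i * (pd e i v x * ((if m = i+1 then 1 else 0) * G m) - pd e (i+1) v x * ((if m = i then 1 else 0) * G m)))"
    by (intro sum.cong refl, subst sum_distrib_right, intro sum.cong refl, simp add: algebra_simps)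
  also have "\<dots> = (\<Sum>i=3..2*k. \<Sum>m=1..2*k+1. alpha lam i * (pd e i v x * ((if m = i+1 then 1 else 0) * G m) - pd e (i+1) v x * ((if m = i then 1 else 0) * G m)))"
    by (rule sum.swap)
  also have "\<dots> = (\<Sum>i=3..2*k. alpha lam i * (pd e i v x * G (i+1) - pd e (i+1) v x * G i))"
  proof (rule sum.cong[OF refl])
    fix i assume i: "i \<in> {3..2*k}"
    have "(\<Sum>m=1..2*k+1. alpha lam i * (pd e i v x * ((if m = i+1 then 1 else 0) * G m) - pd e (i+1) v x * ((if m = i then 1 else 0) * G m)))
      = alpha lam i * (pd e i v x * (\<Sum>m=1..2*k+1. (if m = i+1 then 1 else 0) * G m) - pd e (i+1) v x * (\<Sum>m=1..2*k+1. (if m = i then 1 else 0) * G m))"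
      by (simp add: sum_distrib_left sum_subtractf algebra_simps)
    also have "\<dots> = alpha lam i * (pd e i v x * G (i+1) - pd e (i+1) v x * G i)"
      using i by (simp add: collapse)
    finally show "(\<Sum>m=1..2*k+1. alpha lam i * (pd e i v x * ((if m = i+1 then 1 else 0) * G m) - pd e (i+1) v x * ((if m = i then 1 else 0) * G m)))
      = alpha lam i * (pd e i v x * G (i+1) - pd e (i+1) v x * G i)" .
  qed
  finally show ?thesis using assms by (simp add: collapse G_def)
qed

lemma swap_lemma:
  fixes Z :: "nat \<Rightarrow> real"
  shows "(\<Sum>m\<in>M. Z m * (\<Sum>i\<in>I. a i * (K m i * p i - K m (i+1) * q i)))
       = (\<Sum>i\<in>I. a i * ((\<Sum>m\<in>M. Z m * K m i) * p i - (\<Sum>m\<in>M. Z m * K m (i+1)) * q i))"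
proof -
  have "(\<Sum>m\<in>M. Z m * (\<Sum>i\<in>I. a i * (K m i * p i - K m (i+1) * q i)))
      = (\<Sum>m\<in>M. \<Sum>i\<in>I. a i * ((Z m * K m i) * p i - (Z m * K m (i+1)) * q i))"
    by (intro sum.cong refl, subst sum_distrib_left, intro sum.cong refl, simp add: algebra_simps)
  also have "\<dots> = (\<Sum>i\<in>I. \<Sum>m\<in>M. a i * ((Z m * K m i) * p i - (Z m * K m (i+1)) * q i))"
    by (rule sum.swap)
  also have "\<dots> = (\<Sum>i\<in>I. a i * ((\<Sum>m\<in>M. Z m * K m i) * p i - (\<Sum>m\<in>M. Z m * K m (i+1)) * q i))"
    by (intro sum.cong refl) (simp add: sum_distrib_left sum_distrib_right sum_subtractf algebra_simps)
  finally show ?thesis .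
qed

lemma reindex: "(\<Sum>i=3..2*(k::nat). (g::nat\<Rightarrow>real) i) = (\<Sum>s=2..k. g (2 * s-1) + g (2 * s))"
proof (induction k)
  case 0 then show ?case by simp
next
  case (Suc k)
  show ?case
  proof (cases "k = 0")
    case True then show ?thesis by simp
  next
    case False
    have "{3..2*Suc k} = insert (2*k+2) (insert (2*k+1) {3..2*k})" using False by auto
    then have "(\<Sum>i=3..2*Suc k. g i) = g (2*k+2) + g (2*k+1) + (\<Sum>i=3..2*k. g i)" by simp
    moreover have "{2..Suc k} = insert (Suc k) {2..k}" using False by auto
    then have "(\<Sum>s=2..Suc k. g (2 * s-1) + g (2 * s)) = g (2*Suc k - 1) + g (2 * Suc k) + (\<Sum>s=2..k. g (2 * s-1) + g (2 * s))" by simp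
    ultimately show ?thesis using Suc by simp
  qed
qed



lemma pd_dd: "pd e i f = dd (axis (e i) 1) f"
  by (rule ext) (simp add: pd_def dd_def)

lemma pd_sym:
  assumes "\<And>y. f differentiable (at y)" "\<And>y. pd e a f differentiable (at y)" "\<And>y. pd e b f differentiable (at y)"
    "\<And>y. pd e a (pd e b f) differentiable (at y)" "\<And>y. pd e b (pd e a f) differentiable (at y)"
  shows "pd e a (pd e b f) x = pd e b (pd e a f) x"
proof -
  have c1: "isCont (pd e a (pd e b f)) x" "isCont (pd e b (pd e a f)) x"
    using assms(4,5) differentiable_imp_continuous_within by blast+
  show ?thesis
    using schwarz[of f "axis (e b) 1" "axis (e a) 1" x] assms c1 unfolding pd_dd by blast
qed

lemma pd_eqI: "((\<lambda>t. f (x + t *\<^sub>R axis (e i) 1)) has_real_derivative D) (at 0) \<Longrightarrow> pd e i f x = D"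
  by (simp add: pd_def DERIV_imp_deriv)

lemma pd_field:
  fixes k :: nat and lam :: real
  assumes "\<And>i y. i \<in> {1..2*k+1} \<Longrightarrow> pd e i v differentiable (at y)"
  shows "pd e m (\<lambda>y. c1 + lam * c2 + (\<Sum>i=3..2*k. alpha lam i * (pd e i v y * p i - pd e (i+1) v y * q i))) x
     = (\<Sum>i=3..2*k. alpha lam i * (pd e m (pd e i v) x * p i - pd e m (pd e (i+1) v) x * q i))"
proof (rule pd_eqI)
  have "((\<lambda>t. (\<Sum>i=3..2*k. alpha lam i * (pd e i v (x + t *\<^sub>R axis (e m) 1) * p i - pd e (i+1) v (x + t *\<^sub>R axis (e m) 1) * q i)))
     has_real_derivative (\<Sum>i=3..2*k. alpha lam i * (pd e m (pd e i v) x * p i - pd e m (pd e (i+1) v) x * q i))) (at 0)"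
    by (intro DERIV_sum DERIV_cmult DERIV_diff DERIV_cmult_right pd_DERIV assms) auto
  from DERIV_add[OF DERIV_const[of "c1 + lam * c2"] this]
  show "((\<lambda>t. c1 + lam * c2 + (\<Sum>i=3..2*k. alpha lam i * (pd e i v (x + t *\<^sub>R axis (e m) 1) * p i - pd e (i+1) v (x + t *\<^sub>R axis (e m) 1) * q i)))
     has_real_derivative (\<Sum>i=3..2*k. alpha lam i * (pd e m (pd e i v) x * p i - pd e m (pd e (i+1) v) x * q i))) (at 0)"
    by simp
qed

lemma pd_fieldm:
  fixes k :: nat and lam :: real
  assumes "\<And>i y. i \<in> {1..2*k+1} \<Longrightarrow> pd e i v differentiable (at y)"
  shows "pd e m (\<lambda>y. c1 + lam * c2 - (\<Sum>i=3..2*k. alpha lam i * (pd e i v y * p i - pd e (i+1) v y * q i))) x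
     = - (\<Sum>i=3..2*k. alpha lam i * (pd e m (pd e i v) x * p i - pd e m (pd e (i+1) v) x * q i))"
proof (rule pd_eqI)
  have "((\<lambda>t. (\<Sum>i=3..2*k. alpha lam i * (pd e i v (x + t *\<^sub>R axis (e m) 1) * p i - pd e (i+1) v (x + t *\<^sub>R axis (e m) 1) * q i)))
     has_real_derivative (\<Sum>i=3..2*k. alpha lam i * (pd e m (pd e i v) x * p i - pd e m (pd e (i+1) v) x * q i))) (at 0)"
    by (intro DERIV_sum DERIV_cmult DERIV_diff DERIV_cmult_right pd_DERIV assms) auto
  from DERIV_diff[OF DERIV_const[of "c1 + lam * c2"] this]
  show "((\<lambda>t. c1 + lam * c2 - (\<Sum>i=3..2*k. alpha lam i * (pd e i v (x + t *\<^sub>R axis (e m) 1) * p i - pd e (i+1) v (x + t *\<^sub>R axis (e m) 1) * q i)))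
     has_real_derivative - (\<Sum>i=3..2*k. alpha lam i * (pd e m (pd e i v) x * p i - pd e m (pd e (i+1) v) x * q i))) (at 0)"
    by simp
qed



theorem mainTheorem7:
  fixes k :: nat and e :: "nat \<Rightarrow> 'n::finite" and u v :: "real^'n \<Rightarrow> real"
  assumes "k \<ge> 2"
    and "coord_enum (2*k+1) e"
    and "smooth (2*k+1) e u" and "smooth (2*k+1) e v"
    and "\<And>x. pd e 1 u x + pd e 2 v x =
           (\<Sum>s=2..k. (pd e (2 * s-1) u x * pd e (2 * s) v x) - (pd e (2 * s) u x * pd e (2 * s-1) v x))"
    and "\<And>x. pd e 2 u x + pd e 3 v x =
           (\<Sum>s=2..k. (pd e (2 * s) u x * pd e (2 * s+1) v x) - (pd e (2 * s+1) u x * pd e (2 * s) v x))"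
  shows "\<forall>lam::real. \<forall>j\<in>{1..2*k+1}. \<forall>x.
           lie_bracket (2*k+1) e (fieldX k e lam u) (fieldY k e lam v) j x = 0"
proof (intro allI ballI)
  fix lam :: real and j x
  assume j: "j \<in> {1..2*k+1}"
  have k1: "k \<ge> 1" using assms(1) by simp
  have sm: "ipd e js f differentiable (at y)" if "smooth (2*k+1) e f" "set js \<subseteq> {1..2*k+1}" for f js y
    using that unfolding smooth_def by blast
  have d0u: "u differentiable (at y)" for y using sm[OF assms(3), of "[]"] by simp
  have d0v: "v differentiable (at y)" for y using sm[OF assms(4), of "[]"] by simp
  have d1u: "pd e i u differentiable (at y)" if "i \<in> {1..2*k+1}" for i y
    using sm[OF assms(3), of "[i]"] that by simp
  have d1v: "pd e i v differentiable (at y)" if "i \<in> {1..2*k+1}" for i y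
    using sm[OF assms(4), of "[i]"] that by simp
  have d2u: "pd e i (pd e m u) differentiable (at y)" if "i \<in> {1..2*k+1}" "m \<in> {1..2*k+1}" for i m y
    using sm[OF assms(3), of "[i,m]"] that by simp
  have d2v: "pd e i (pd e m v) differentiable (at y)" if "i \<in> {1..2*k+1}" "m \<in> {1..2*k+1}" for i m y
    using sm[OF assms(4), of "[i,m]"] that by simp
  have symu: "pd e c (pd e m u) x = pd e m (pd e c u) x" if "c \<in> {1..2*k+1}" "m \<in> {1..2*k+1}" for c m
    by (rule pd_sym) (use that d0u d1u d2u in auto)
  have symv: "pd e c (pd e m v) x = pd e m (pd e c v) x" if "c \<in> {1..2*k+1}" "m \<in> {1..2*k+1}" for c m
    by (rule pd_sym) (use that d0v d1v d2v in auto)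
  define F where "F \<equiv> \<lambda>y. pd e 1 u y + lam * pd e 2 u y + pd e 2 v y + lam * pd e 3 v y
        - (\<Sum>i=3..2*k. alpha lam i * (pd e i u y * pd e (i+1) v y - pd e (i+1) u y * pd e i v y))"
  have F0: "F y = 0" for y
  proof -
    have "(\<Sum>i=3..2*k. alpha lam i * (pd e i u y * pd e (i+1) v y - pd e (i+1) u y * pd e i v y))
      = (\<Sum>s=2..k. alpha lam (2 * s - 1) * (pd e (2 * s - 1) u y * pd e (2 * s - 1 + 1) v y - pd e (2 * s - 1 + 1) u y * pd e (2 * s - 1) v y)
          + alpha lam (2 * s) * (pd e (2 * s) u y * pd e (2 * s + 1) v y - pd e (2 * s + 1) u y * pd e (2 * s) v y))"
      by (rule reindex)
    also have "\<dots> = (\<Sum>s=2..k. (pd e (2 * s-1) u y * pd e (2 * s) v y) - (pd e (2 * s) u y * pd e (2 * s-1) v y))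
       + lam * (\<Sum>s=2..k. (pd e (2 * s) u y * pd e (2 * s+1) v y) - (pd e (2 * s+1) u y * pd e (2 * s) v y))"
      unfolding sum_distrib_left sum.distrib[symmetric]
      by (rule sum.cong) (auto simp: alpha_def)
    also have "\<dots> = pd e 1 u y + pd e 2 v y + lam * (pd e 2 u y + pd e 3 v y)"
      using assms(5,6) by simp
    finally show ?thesis unfolding F_def by (simp add: algebra_simps)
  qed
  have key: "vf_apply (2*k+1) e (fieldX k e lam u) (pd e c v) x + vf_apply (2*k+1) e (fieldY k e lam v) (pd e c u) x = 0"
    if c: "c \<in> {1..2*k+1}" for c
  proof -
    have "pd e c F x = 0" unfolding F0[abs_def] by (rule pd_eqI) simp
    moreover have "pd e c F x = pd e c (pd e 1 u) x + lam * pd e c (pd e 2 u) x + pd e c (pd e 2 v) x + lam * pd e c (pd e 3 v) x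
     - (\<Sum>i=3..2*k. alpha lam i * (pd e c (pd e i u) x * pd e (i+1) v x + pd e i u x * pd e c (pd e (i+1) v) x
           - (pd e c (pd e (i+1) u) x * pd e i v x + pd e (i+1) u x * pd e c (pd e i v) x)))"
      unfolding F_def by (rule pd_eqI, rule F_DERIV) (use d1u d1v k1 in auto)
    moreover have "(\<Sum>i=3..2*k. alpha lam i * (pd e c (pd e i u) x * pd e (i+1) v x + pd e i u x * pd e c (pd e (i+1) v) x
           - (pd e c (pd e (i+1) u) x * pd e i v x + pd e (i+1) u x * pd e c (pd e i v) x)))
      = (\<Sum>i=3..2*k. alpha lam i * (pd e i u x * pd e (i+1) (pd e c v) x - pd e (i+1) u x * pd e i (pd e c v) x))
       - (\<Sum>i=3..2*k. alpha lam i * (pd e i v x * pd e (i+1) (pd e c u) x - pd e (i+1) v x * pd e i (pd e c u) x))"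
      unfolding sum_subtractf[symmetric]
      by (rule sum.cong) (use c symu symv in \<open>auto simp: algebra_simps\<close>)
    moreover have "pd e c (pd e 1 u) x = pd e 1 (pd e c u) x" "pd e c (pd e 2 u) x = pd e 2 (pd e c u) x"
      "pd e c (pd e 2 v) x = pd e 2 (pd e c v) x" "pd e c (pd e 3 v) x = pd e 3 (pd e c v) x"
      using c k1 by (auto intro!: symu symv)
    ultimately show ?thesis unfolding VX[OF k1] VY[OF k1] by (simp add: algebra_simps)
  qed
  let ?X = "fieldX k e lam u" and ?Y = "fieldY k e lam v"
  let ?p = "\<lambda>i. if j = i+1 then 1 else (0::real)" and ?q = "\<lambda>i. if j = i then 1 else (0::real)"
  have pY: "pd e m (?Y j) x = (\<Sum>i=3..2*k. alpha lam i * (pd e m (pd e i v) x * ?p i - pd e m (pd e (i+1) v) x * ?q i))" for m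
    unfolding fieldY_def dvf_def by (rule pd_field) (rule d1v)
  have pX: "pd e m (?X j) x = - (\<Sum>i=3..2*k. alpha lam i * (pd e m (pd e i u) x * ?p i - pd e m (pd e (i+1) u) x * ?q i))" for m
    unfolding fieldX_def dvf_def by (rule pd_fieldm) (rule d1u)
  have "lie_bracket (2*k+1) e ?X ?Y j x =
      (\<Sum>m=1..2*k+1. ?X m x * (\<Sum>i=3..2*k. alpha lam i * (pd e m (pd e i v) x * ?p i - pd e m (pd e (i+1) v) x * ?q i)))
    + (\<Sum>m=1..2*k+1. ?Y m x * (\<Sum>i=3..2*k. alpha lam i * (pd e m (pd e i u) x * ?p i - pd e m (pd e (i+1) u) x * ?q i)))"
    unfolding lie_bracket_def vf_apply_def pY pX by (simp add: sum_negf)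
  also have "\<dots> = (\<Sum>i=3..2*k. alpha lam i * (vf_apply (2*k+1) e ?X (pd e i v) x * ?p i - vf_apply (2*k+1) e ?X (pd e (i+1) v) x * ?q i))
     + (\<Sum>i=3..2*k. alpha lam i * (vf_apply (2*k+1) e ?Y (pd e i u) x * ?p i - vf_apply (2*k+1) e ?Y (pd e (i+1) u) x * ?q i))"
    unfolding vf_apply_def by (rule arg_cong2[where f="(+)"]; rule swap_lemma)
  also have "(\<Sum>i=3..2*k. alpha lam i * (vf_apply (2*k+1) e ?X (pd e i v) x * ?p i - vf_apply (2*k+1) e ?X (pd e (i+1) v) x * ?q i))
     = - (\<Sum>i=3..2*k. alpha lam i * (vf_apply (2*k+1) e ?Y (pd e i u) x * ?p i - vf_apply (2*k+1) e ?Y (pd e (i+1) u) x * ?q i))"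
    unfolding sum_negf[symmetric]
  proof (rule sum.cong[OF refl])
    fix i assume i: "i \<in> {3..2*k}"
    have "vf_apply (2*k+1) e ?X (pd e i v) x = - vf_apply (2*k+1) e ?Y (pd e i u) x"
      "vf_apply (2*k+1) e ?X (pd e (i+1) v) x = - vf_apply (2*k+1) e ?Y (pd e (i+1) u) x"
      using key[of i] key[of "i+1"] i by auto
    then show "alpha lam i * (vf_apply (2*k+1) e ?X (pd e i v) x * ?p i - vf_apply (2*k+1) e ?X (pd e (i+1) v) x * ?q i)
      = - (alpha lam i * (vf_apply (2*k+1) e ?Y (pd e i u) x * ?p i - vf_apply (2*k+1) e ?Y (pd e (i+1) u) x * ?q i))"
      by (simp add: algebra_simps)
  qed
  finally show "lie_bracket (2*k+1) e ?X ?Y j x = 0" by simp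
qed

end
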